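(* Let $\mathcal H$ be a finite-dimensional complex Hilbert space, $A$ Hermitian, $\rho$ a density operator and $|\phi\rangle$ a unit vector with $\langle\phi|\rho|\phi\rangle>0$, and define $C(\rho,A,\phi):=\big(\langle\Delta A_w\rangle^{\phi}_{\rho}\big)^2-\big(\langle\Delta A\rangle^{\phi}_{\rho}\big)^2$. Then: (i) $C(\rho,A,\phi)\ge0$; (ii) $C(\rho,A,\phi)=0$ when $\rho$ is pure; (iii) if $\mathcal H=\mathcal H_1\otimes\mathcal H_2$, $\rho=\rho_1\otimes\rho_2$, $|\phi\rangle=|\phi_1\rangle\otimes|\phi_2\rangle$ with $\langle\phi_j|\rho_j|\phi_j\rangle>0$, and $A_1,A_2$ are Hermitian on $\mathcal H_1,\mathcal H_2$ respectively, then $$C(\rho,A_1\otimes I+I\otimes A_2,\phi)=C(\rho,A_1\otimes I,\phi)+C(\rho,I\otimes A_2,\phi).$$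
   Context: For a density operator $\rho$, Hermitian $X$ and unit vector $|\phi\rangle$ with $\langle\phi|\rho|\phi\rangle>0$: $\big(\langle\Delta X\rangle^{\phi}_{\rho}\big)^2:=\operatorname{Tr}(X^2\rho)-\langle\phi|X\rho X|\phi\rangle$ and $\big(\langle\Delta X_w\rangle^{\phi}_{\rho}\big)^2:=\operatorname{Tr}(X^2\rho)-\frac{|\langle\phi|X\rho|\phi\rangle|^2}{\langle\phi|\rho|\phi\rangle}$. *)

theory Defs
  imports "HOL-Analysis.Analysis"
begin

text \<open>Finite-dimensional complex Hilbert spaces are modelled as complex^'n with a finite
  index type 'n; operators are complex matrices complex^'n^'n.\<close>

definition braket :: "complex^'n \<Rightarrow> complex^'n \<Rightarrow> complex" where
  "braket u v = (\<Sum>i\<in>UNIV. cnj (u$i) * v$i)"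

definition cadj :: "complex^'n^'m \<Rightarrow> complex^'m^'n" where
  "cadj A = (\<chi> i j. cnj (A$j$i))"

definition hermitian :: "complex^'n^'n \<Rightarrow> bool" where
  "hermitian A \<longleftrightarrow> cadj A = A"

definition ctrace :: "complex^'n^'n \<Rightarrow> complex" where
  "ctrace A = (\<Sum>i\<in>UNIV. A$i$i)"

definition unit_vec :: "complex^'n \<Rightarrow> bool" where
  "unit_vec v \<longleftrightarrow> braket v v = 1"

definition density :: "complex^'n^'n \<Rightarrow> bool" where
  "density \<rho> \<longleftrightarrow> hermitian \<rho> \<and>
     (\<forall>v. Im (braket v (\<rho> *v v)) = 0 \<and> 0 \<le> Re (braket v (\<rho> *v v))) \<and>
     ctrace \<rho> = 1"

definition outer :: "complex^'n \<Rightarrow> complex^'n \<Rightarrow> complex^'n^'n" where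
  "outer u v = (\<chi> i j. u$i * cnj (v$j))"

definition pure_state :: "complex^'n^'n \<Rightarrow> bool" where
  "pure_state \<rho> \<longleftrightarrow> (\<exists>\<psi>. unit_vec \<psi> \<and> \<rho> = outer \<psi> \<psi>)"

definition kron :: "complex^'a^'a \<Rightarrow> complex^'b^'b \<Rightarrow> complex^('a\<times>'b)^('a\<times>'b)" where
  "kron A B = (\<chi> p q. A$(fst p)$(fst q) * B$(snd p)$(snd q))"

definition vkron :: "complex^'a \<Rightarrow> complex^'b \<Rightarrow> complex^('a\<times>'b)" where
  "vkron u v = (\<chi> p. u$(fst p) * v$(snd p))"

text \<open>Squared (non-weak) variance  Tr(X^2 rho) - <phi|X rho X|phi>  (a real number for
  Hermitian X and density rho; we take real parts).\<close>
definition var_sq :: "complex^'n^'n \<Rightarrow> complex^'n^'n \<Rightarrow> complex^'n \<Rightarrow> real" where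
  "var_sq \<rho> X \<phi> = Re (ctrace (X ** X ** \<rho>)) - Re (braket \<phi> ((X ** \<rho> ** X) *v \<phi>))"

definition wvar_sq :: "complex^'n^'n \<Rightarrow> complex^'n^'n \<Rightarrow> complex^'n \<Rightarrow> real" where
  "wvar_sq \<rho> X \<phi> = Re (ctrace (X ** X ** \<rho>))
     - (cmod (braket \<phi> ((X ** \<rho>) *v \<phi>)))^2 / Re (braket \<phi> (\<rho> *v \<phi>))"

definition Cfun :: "complex^'n^'n \<Rightarrow> complex^'n^'n \<Rightarrow> complex^'n \<Rightarrow> real" where
  "Cfun \<rho> A \<phi> = wvar_sq \<rho> A \<phi> - var_sq \<rho> A \<phi>"

end

theory Submission
  imports Defs
begin

lemma braket_adj: "braket u (M *v v) = braket (cadj M *v u) v"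
  unfolding braket_def matrix_vector_mult_def cadj_def
  apply (simp add: sum_distrib_left sum_distrib_right cnj_sum)
  apply (subst sum.swap)
  apply (simp add: mult_ac)
  done

lemma braket_cnj: "braket u v = cnj (braket v u)"
  unfolding braket_def by (simp add: cnj_sum mult_ac)

lemma braket_add_left: "braket (x + y) z = braket x z + braket y z"
  unfolding braket_def by (simp add: sum.distrib distrib_right)
lemma braket_add_right: "braket z (x + y) = braket z x + braket z y"
  unfolding braket_def by (simp add: sum.distrib distrib_left)
lemma braket_diff_left: "braket (x - y) z = braket x z - braket y z"
  unfolding braket_def by (simp add: sum_subtractf left_diff_distrib)
lemma braket_diff_right: "braket z (x - y) = braket z x - braket z y"
  unfolding braket_def by (simp add: sum_subtractf right_diff_distrib)
lemma braket_scale_left: "braket (c *s x) z = cnj c * braket x z"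
  unfolding braket_def by (simp add: sum_distrib_left mult_ac)
lemma braket_scale_right: "braket z (c *s x) = c * braket z x"
  unfolding braket_def by (simp add: sum_distrib_left mult_ac)
lemma mv_scale: "(M::complex^'n^'m) *v (c *s x) = c *s (M *v x)"
  unfolding matrix_vector_mult_def by (simp add: vec_eq_iff sum_distrib_left mult_ac)

lemma herm_braket: "hermitian A \<Longrightarrow> braket u (A *v v) = braket (A *v u) v"
  unfolding hermitian_def by (metis braket_adj)

lemma reduce:
  assumes "hermitian A"
  shows "Cfun \<rho> A \<phi> = Re (braket (A *v \<phi>) (\<rho> *v (A *v \<phi>)))
     - (cmod (braket (A *v \<phi>) (\<rho> *v \<phi>)))^2 / Re (braket \<phi> (\<rho> *v \<phi>))"
proof -
  have 1: "braket \<phi> ((A ** \<rho> ** A) *v \<phi>) = braket (A *v \<phi>) (\<rho> *v (A *v \<phi>))"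
    by (simp add: matrix_vector_mul_assoc[symmetric] herm_braket[OF assms])
  have 2: "braket \<phi> ((A ** \<rho>) *v \<phi>) = braket (A *v \<phi>) (\<rho> *v \<phi>)"
    by (simp add: matrix_vector_mul_assoc[symmetric] herm_braket[OF assms])
  show ?thesis unfolding Cfun_def wvar_sq_def var_sq_def 1 2 by simp
qed

lemma dens_herm: "density \<rho> \<Longrightarrow> braket u (\<rho> *v v) = cnj (braket v (\<rho> *v u))"
  unfolding density_def hermitian_def
  by (metis braket_adj braket_cnj)

lemma dens_real: "density \<rho> \<Longrightarrow> braket v (\<rho> *v v) = of_real (Re (braket v (\<rho> *v v)))"
  unfolding density_def by (simp add: complex_eq_iff)

lemma dens_pos: "density \<rho> \<Longrightarrow> 0 \<le> Re (braket v (\<rho> *v v))"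
  unfolding density_def by simp

lemma CS:
  assumes d: "density \<rho>" and r: "Re (braket \<phi> (\<rho> *v \<phi>)) > 0"
  shows "(cmod (braket u (\<rho> *v \<phi>)))^2 / Re (braket \<phi> (\<rho> *v \<phi>)) \<le> Re (braket u (\<rho> *v u))"
proof -
  define c where "c = braket u (\<rho> *v \<phi>)"
  define r where "r = Re (braket \<phi> (\<rho> *v \<phi>))"
  define t where "t = cnj c / of_real r"
  define w where "w = u - t *s \<phi>"
  have fpu: "braket \<phi> (\<rho> *v u) = cnj c" unfolding c_def by (rule dens_herm[OF d])
  have fpp: "braket \<phi> (\<rho> *v \<phi>) = of_real r" unfolding r_def by (rule dens_real[OF d])
  have e1: "braket w (\<rho> *v w) = braket u (\<rho> *v u) - t * c - cnj t * cnj c + cnj t * t * of_real r"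
  proof -
    have "braket w (\<rho> *v w) = braket (u - t *s \<phi>) (\<rho> *v u - t *s (\<rho> *v \<phi>))"
      unfolding w_def by (simp only: matrix_vector_mult_diff_distrib mv_scale)
    also have "\<dots> = braket u (\<rho> *v u) - t * braket u (\<rho> *v \<phi>)
       - (cnj t * braket \<phi> (\<rho> *v u) - cnj t * (t * braket \<phi> (\<rho> *v \<phi>)))"
      by (simp only: braket_diff_left braket_diff_right braket_scale_left braket_scale_right) (simp add: algebra_simps)
    finally show ?thesis unfolding fpu fpp c_def[symmetric] by (simp add: algebra_simps)
  qed
  have cc: "cnj c * c = of_real ((cmod c)^2)" by (metis complex_norm_square mult.commute of_real_power)
  have tc: "t * c = of_real ((cmod c)^2 / r)" unfolding t_def using cc by simp
  have tc2: "cnj t * cnj c = of_real ((cmod c)^2 / r)" using arg_cong[OF tc, of cnj] by (simp add: mult.commute)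
  have tt: "cnj t * t * of_real r = of_real ((cmod c)^2 / r)"
  proof -
    have "cnj t * t * of_real r = cnj c * c / of_real r"
      unfolding t_def using r unfolding r_def[symmetric] by (simp add: field_simps power2_eq_square)
    thus ?thesis unfolding cc by simp
  qed
  have e2: "Re (braket w (\<rho> *v w)) = Re (braket u (\<rho> *v u)) - (cmod c)^2 / r"
    unfolding e1 tc tc2 tt by simp
  have "0 \<le> Re (braket u (\<rho> *v u)) - (cmod c)^2 / r"
    using dens_pos[OF d, of w] e2 by simp
  thus ?thesis unfolding c_def r_def by simp
qed


lemma outer_braket: "braket u (outer \<psi> \<psi> *v v) = braket u \<psi> * braket \<psi> v"
  unfolding braket_def outer_def matrix_vector_mult_def
  apply (simp add: sum_distrib_left sum_distrib_right mult_ac)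
  apply (rule sum.swap)
  done
lemma pure_zero:
  assumes "hermitian A" "Re (braket \<phi> (outer \<psi> \<psi> *v \<phi>)) > 0"
  shows "Cfun (outer \<psi> \<psi>) A \<phi> = 0"
proof -
  define x where "x = braket (A *v \<phi>) \<psi>"
  define y where "y = braket \<psi> \<phi>"
  have py: "braket \<phi> \<psi> = cnj y" unfolding y_def by (rule braket_cnj)
  have xx: "Re (x * cnj x) = (cmod x)^2" by (metis Re_complex_of_real complex_norm_square)
  have yy: "Re (cnj y * y) = (cmod y)^2" by (metis Re_complex_of_real complex_norm_square mult.commute)
  have "Re (cnj y * y) > 0" using assms(2) unfolding outer_braket py y_def[symmetric] .
  hence "cmod y \<noteq> 0" using yy by auto
  have "Cfun (outer \<psi> \<psi>) A \<phi> = Re (x * cnj x) - (cmod (x * y))^2 / Re (cnj y * y)"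
    unfolding reduce[OF assms(1)] outer_braket x_def[symmetric] y_def[symmetric] py
    by (simp add: braket_cnj[of \<psi> "A *v \<phi>"] x_def)
  also have "\<dots> = 0" unfolding xx yy using \<open>cmod y \<noteq> 0\<close>
    by (simp add: norm_mult power_mult_distrib)
  finally show ?thesis .
qed

lemma sum_UNIV_prod: "(\<Sum>p\<in>(UNIV::('a::finite \<times> 'b::finite) set). f p) = (\<Sum>i\<in>UNIV. \<Sum>j\<in>UNIV. f (i,j))"
  by (simp add: UNIV_Times_UNIV[symmetric] sum.cartesian_product del: UNIV_Times_UNIV)

lemma kron_mv: "kron M N *v vkron x y = vkron (M *v x) (N *v y)"
  unfolding kron_def vkron_def matrix_vector_mult_def
  by (simp add: vec_eq_iff sum_UNIV_prod sum_product mult_ac)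

lemma braket_vkron: "braket (vkron u v) (vkron x y) = braket u x * braket v y"
  unfolding braket_def vkron_def
  by (simp add: sum_UNIV_prod sum_product mult_ac)

lemma herm_kron: "hermitian A \<Longrightarrow> hermitian B \<Longrightarrow> hermitian (kron A B)"
  unfolding hermitian_def cadj_def kron_def by (simp add: vec_eq_iff)

lemma herm_mat1: "hermitian (mat 1)"
  unfolding hermitian_def cadj_def mat_def by (simp add: vec_eq_iff)

lemma herm_add: "hermitian A \<Longrightarrow> hermitian B \<Longrightarrow> hermitian (A + B)"
  unfolding hermitian_def cadj_def by (simp add: vec_eq_iff)


lemma alg:
  fixes a b :: complex and P Q R1 R2 :: real
  assumes "R1 > 0" "R2 > 0"
  shows "Re (of_real P * of_real R2 + cnj a * b + (a * cnj b + of_real R1 * of_real Q))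
     - (cmod (a * of_real R2 + of_real R1 * b))^2 / Re (of_real R1 * of_real R2)
   = (Re (of_real P * of_real R2) - (cmod (a * of_real R2))^2 / Re (of_real R1 * of_real R2))
   + (Re (of_real R1 * of_real Q) - (cmod (of_real R1 * b))^2 / Re (of_real R1 * of_real R2))"
  using assms apply (simp add: cmod_power2)
  apply (simp add: power2_eq_square field_simps)
  done

lemma prod_part:
  fixes \<rho>1 :: "complex^'a::finite^'a" and \<rho>2 :: "complex^'b::finite^'b"
  assumes d1: "density \<rho>1" and d2: "density \<rho>2"
    and r1: "Re (braket \<phi>1 (\<rho>1 *v \<phi>1)) > 0" and r2: "Re (braket \<phi>2 (\<rho>2 *v \<phi>2)) > 0"
    and h1: "hermitian A1" and h2: "hermitian A2"
  shows "Cfun (kron \<rho>1 \<rho>2) (kron A1 (mat 1) + kron (mat 1) A2) (vkron \<phi>1 \<phi>2)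
        = Cfun (kron \<rho>1 \<rho>2) (kron A1 (mat 1)) (vkron \<phi>1 \<phi>2)
          + Cfun (kron \<rho>1 \<rho>2) (kron (mat 1) A2) (vkron \<phi>1 \<phi>2)"
proof -
  define p where "p = A1 *v \<phi>1"
  define q where "q = A2 *v \<phi>2"
  define R1 where "R1 = Re (braket \<phi>1 (\<rho>1 *v \<phi>1))"
  define R2 where "R2 = Re (braket \<phi>2 (\<rho>2 *v \<phi>2))"
  define P where "P = Re (braket p (\<rho>1 *v p))"
  define Q where "Q = Re (braket q (\<rho>2 *v q))"
  define a where "a = braket p (\<rho>1 *v \<phi>1)"
  define b where "b = braket q (\<rho>2 *v \<phi>2)"
  have fk: "\<And>x y z w. braket (vkron x y) (kron \<rho>1 \<rho>2 *v vkron z w) = braket x (\<rho>1 *v z) * braket y (\<rho>2 *v w)"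
    by (simp add: kron_mv braket_vkron)
  have v1: "kron A1 (mat 1) *v vkron \<phi>1 \<phi>2 = vkron p \<phi>2" by (simp add: kron_mv p_def)
  have v2: "kron (mat 1) A2 *v vkron \<phi>1 \<phi>2 = vkron \<phi>1 q" by (simp add: kron_mv q_def)
  have v3: "(kron A1 (mat 1) + kron (mat 1) A2) *v vkron \<phi>1 \<phi>2 = vkron p \<phi>2 + vkron \<phi>1 q"
    by (simp add: matrix_vector_mult_add_rdistrib v1 v2)
  have H1: "hermitian (kron A1 (mat 1))" by (simp add: herm_kron h1 herm_mat1)
  have H2: "hermitian (kron (mat 1) A2)" by (simp add: herm_kron h2 herm_mat1)
  have H3: "hermitian (kron A1 (mat 1) + kron (mat 1) A2)" by (simp add: herm_add H1 H2)
  have e1: "braket \<phi>1 (\<rho>1 *v \<phi>1) = of_real R1" unfolding R1_def by (rule dens_real[OF d1])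
  have e2: "braket \<phi>2 (\<rho>2 *v \<phi>2) = of_real R2" unfolding R2_def by (rule dens_real[OF d2])
  have e3: "braket p (\<rho>1 *v p) = of_real P" unfolding P_def by (rule dens_real[OF d1])
  have e4: "braket q (\<rho>2 *v q) = of_real Q" unfolding Q_def by (rule dens_real[OF d2])
  have e5: "braket \<phi>1 (\<rho>1 *v p) = cnj a" unfolding a_def by (rule dens_herm[OF d1])
  have e6: "braket \<phi>2 (\<rho>2 *v q) = cnj b" unfolding b_def by (rule dens_herm[OF d2])
  have C1: "Cfun (kron \<rho>1 \<rho>2) (kron A1 (mat 1)) (vkron \<phi>1 \<phi>2)
     = Re (of_real P * of_real R2) - (cmod (a * of_real R2))^2 / Re (of_real R1 * of_real R2)"
    by (simp only: reduce[OF H1] v1 fk e1 e2 e3 e4 e5 e6 a_def[symmetric] b_def[symmetric])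
  have C2: "Cfun (kron \<rho>1 \<rho>2) (kron (mat 1) A2) (vkron \<phi>1 \<phi>2)
     = Re (of_real R1 * of_real Q) - (cmod (of_real R1 * b))^2 / Re (of_real R1 * of_real R2)"
    by (simp only: reduce[OF H2] v2 fk e1 e2 e3 e4 e5 e6 a_def[symmetric] b_def[symmetric])
  have C3: "Cfun (kron \<rho>1 \<rho>2) (kron A1 (mat 1) + kron (mat 1) A2) (vkron \<phi>1 \<phi>2)
     = Re (of_real P * of_real R2 + cnj a * b + (a * cnj b + of_real R1 * of_real Q))
     - (cmod (a * of_real R2 + of_real R1 * b))^2 / Re (of_real R1 * of_real R2)"
    by (simp only: reduce[OF H3] v3 matrix_vector_right_distrib braket_add_left braket_add_right
         fk e1 e2 e3 e4 e5 e6 a_def[symmetric] b_def[symmetric])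
  have "R1 > 0" "R2 > 0" using r1 r2 unfolding R1_def R2_def by auto
  then show ?thesis unfolding C1 C2 C3 by (rule alg)
qed

theorem mainTheorem9:
  shows
  "(\<forall>(\<rho>::complex^'n::finite^'n) A \<phi>. density \<rho> \<and> hermitian A \<and> unit_vec \<phi> \<and>
        Re (braket \<phi> (\<rho> *v \<phi>)) > 0 \<longrightarrow> Cfun \<rho> A \<phi> \<ge> 0)
   \<and> (\<forall>(\<rho>::complex^'n^'n) A \<phi>. density \<rho> \<and> pure_state \<rho> \<and> hermitian A \<and> unit_vec \<phi> \<and>
        Re (braket \<phi> (\<rho> *v \<phi>)) > 0 \<longrightarrow> Cfun \<rho> A \<phi> = 0)
   \<and> (\<forall>(\<rho>1::complex^'a::finite^'a) (\<rho>2::complex^'b::finite^'b) \<phi>1 \<phi>2 A1 A2.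
        density \<rho>1 \<and> density \<rho>2 \<and> unit_vec \<phi>1 \<and> unit_vec \<phi>2 \<and>
        Re (braket \<phi>1 (\<rho>1 *v \<phi>1)) > 0 \<and> Re (braket \<phi>2 (\<rho>2 *v \<phi>2)) > 0 \<and>
        hermitian A1 \<and> hermitian A2 \<longrightarrow>
        Cfun (kron \<rho>1 \<rho>2) (kron A1 (mat 1) + kron (mat 1) A2) (vkron \<phi>1 \<phi>2)
        = Cfun (kron \<rho>1 \<rho>2) (kron A1 (mat 1)) (vkron \<phi>1 \<phi>2)
          + Cfun (kron \<rho>1 \<rho>2) (kron (mat 1) A2) (vkron \<phi>1 \<phi>2))"
proof (intro conjI allI impI)
  fix \<rho> :: "complex^'n::finite^'n" and A :: "complex^'n^'n" and \<phi> :: "complex^'n"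
  assume h: "density \<rho> \<and> hermitian A \<and> unit_vec \<phi> \<and> Re (braket \<phi> (\<rho> *v \<phi>)) > 0"
  show "Cfun \<rho> A \<phi> \<ge> 0"
    using CS[of \<rho> \<phi> "A *v \<phi>"] h by (simp add: reduce)
next
  fix \<rho> :: "complex^'n::finite^'n" and A :: "complex^'n^'n" and \<phi> :: "complex^'n"
  assume h: "density \<rho> \<and> pure_state \<rho> \<and> hermitian A \<and> unit_vec \<phi> \<and> Re (braket \<phi> (\<rho> *v \<phi>)) > 0"
  then obtain \<psi> where "\<rho> = outer \<psi> \<psi>" unfolding pure_state_def by blast
  thus "Cfun \<rho> A \<phi> = 0" using pure_zero h by blast
next
  fix \<rho>1 :: "complex^'a::finite^'a" and \<rho>2 :: "complex^'b::finite^'b" and \<phi>1 \<phi>2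
    and A1 :: "complex^'a^'a" and A2 :: "complex^'b^'b"
  assume "density \<rho>1 \<and> density \<rho>2 \<and> unit_vec \<phi>1 \<and> unit_vec \<phi>2 \<and>
        Re (braket \<phi>1 (\<rho>1 *v \<phi>1)) > 0 \<and> Re (braket \<phi>2 (\<rho>2 *v \<phi>2)) > 0 \<and>
        hermitian A1 \<and> hermitian A2"
  thus "Cfun (kron \<rho>1 \<rho>2) (kron A1 (mat 1) + kron (mat 1) A2) (vkron \<phi>1 \<phi>2)
        = Cfun (kron \<rho>1 \<rho>2) (kron A1 (mat 1)) (vkron \<phi>1 \<phi>2)
          + Cfun (kron \<rho>1 \<rho>2) (kron (mat 1) A2) (vkron \<phi>1 \<phi>2)"
    using prod_part by blast
qed

end
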